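(* Let $\alpha\in[0,1)$. The function $g_\alpha$ attains its global maximum on $[0,1]$ at a single point $x_0\in[0,1/2]$, which is characterized as the solution of $G_\alpha(x_0)=x_0+\tfrac12$. Moreover: (1) if $\alpha>0$, $x_0$ is the only critical point of $g_\alpha$ in $[0,1]$; (2) in the two-type setting, if $\phi_i<2\log2$ then for every $p\in[0,1]^2$ with $p_i\le\bar p_i$ one has $f^{(i)}(p)<x_0(\alpha(i))$, where $x_0(\alpha(i))$ is the maximizer of $g_{\alpha(i)}$; in particular $g_{\alpha(i)}'(f^{(i)}(p))\ge0$ for all $p\in[0,\bar p_1]\times[0,\bar p_2]$.
   Context: For $\alpha\in(0,1)$ let $g_\alpha(x)=\frac{(1-\sqrt{1-4(1-\alpha)x(1-x)})^3}{8(1-\alpha)^2x^2}$ for $x\in(0,1]$ and $g_\alpha(0)=0$; let $g_0(x)=x$ for $x\le1/2$ and $g_0(x)=(1-x)^3/x^2$ for $x>1/2$. Let $G_\alpha(x)=\frac{1-\sqrt{1-4(1-\alpha)x(1-x)}}{2(1-\alpha)x}$ (with $G_\alpha(0)=1$), so $g_\alpha(x)=(1-\alpha)xG_\alpha(x)^3$. Two-type setting: $\beta_1,\beta_2>0$, $\alpha(1),\alpha(2)\in[0,1)$, $\phi_i=(1-\alpha(i))\beta_i$; for $p\in[0,1]^2$, $S(p)=\beta_1p_1+\beta_2p_2$ and $f^{(i)}(p)=(1-e^{-S(p)})\beta_ip_i/S(p)$ ($=0$ if $S(p)=0$); $\bar p_i=\sup_{x\in[0,1]}g_{\alpha(i)}(x)$.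 *)

theory Defs
  imports "HOL-Analysis.Analysis"
begin

definition GG :: "real \<Rightarrow> real \<Rightarrow> real" where
  "GG a x = (if x = 0 then 1
     else (1 - sqrt (1 - 4 * (1 - a) * x * (1 - x))) / (2 * (1 - a) * x))"

definition gg :: "real \<Rightarrow> real \<Rightarrow> real" where
  "gg a x = (if a = 0 then (if x \<le> 1/2 then x else (1 - x)^3 / x^2)
     else if x = 0 then 0
     else (1 - sqrt (1 - 4 * (1 - a) * x * (1 - x)))^3 / (8 * (1 - a)^2 * x^2))"

definition xmax :: "real \<Rightarrow> real" where
  "xmax a = (THE x. x \<in> {0..1} \<and> (\<forall>y\<in>{0..1}. gg a y \<le> gg a x))"

text \<open>Two-type setting; types are indexed by 1 and 2.\<close>
definition SS :: "(nat \<Rightarrow> real) \<Rightarrow> (nat \<Rightarrow> real) \<Rightarrow> real" where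
  "SS beta p = beta 1 * p 1 + beta 2 * p 2"

definition ff :: "(nat \<Rightarrow> real) \<Rightarrow> nat \<Rightarrow> (nat \<Rightarrow> real) \<Rightarrow> real" where
  "ff beta i p = (if SS beta p = 0 then 0
     else (1 - exp (- SS beta p)) * beta i * p i / SS beta p)"

definition pbar :: "real \<Rightarrow> real" where
  "pbar a = (SUP x\<in>{0..1}. gg a x)"

end

theory Submission
  imports Defs
begin

definition sq :: "real \<Rightarrow> real \<Rightarrow> real" where "sq c x = sqrt (1 - 4*c*x*(1-x))"
definition HH :: "real \<Rightarrow> real \<Rightarrow> real" where "HH c x = 2*(1-x)/(1 + sq c x)"
definition hh :: "real \<Rightarrow> real \<Rightarrow> real" where "hh c x = c*x*(HH c x)^3"
definition pp :: "real \<Rightarrow> real \<Rightarrow> real" where "pp c x = c*x*(x+1/2)^2 - 2*x + 1/2"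

lemma rad_nonneg: fixes c x :: real assumes "0 < c" "c \<le> 1" shows "0 \<le> 1 - 4*c*x*(1-x)"
proof (cases "x*(1-x) \<le> 0")
  case True then show ?thesis using assms
    by (smt (verit) mult_nonneg_nonpos mult.assoc)
next
  case False
  have "c*(x*(1-x)) \<le> x*(1-x)" using assms False by (simp add: mult_left_le_one_le)
  moreover have "4*(x*(1-x)) \<le> 1" using sum_squares_ge_zero[of "1-2*x" 0]
    by (simp add: power2_eq_square algebra_simps) 
  ultimately show ?thesis by (simp add: algebra_simps)
qed

lemma rad_pos: fixes c x :: real assumes "0 < c" "c \<le> 1" "c < 1 \<or> x \<noteq> 1/2" shows "0 < 1 - 4*c*x*(1-x)"
proof (cases "x*(1-x) \<le> 0")
  case True then show ?thesis using assms
    by (smt (verit) mult_nonneg_nonpos mult.assoc)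
next
  case False
  have "(1-2*x)^2 \<ge> 0" by simp
  then have A: "4*(x*(1-x)) \<le> 1" by (simp add: power2_eq_square algebra_simps) 
  show ?thesis
  proof (cases "c < 1")
    case True
    have "c*(x*(1-x)) < x*(1-x)" using True False mult_strict_right_mono[of c 1 "x*(1-x)"] by simp
    then show ?thesis using A by (simp add: algebra_simps)
  next
    case False
    then have "c = 1" "x \<noteq> 1/2" using assms by auto
    then have "(1-2*x)^2 > 0" by auto
    then show ?thesis using \<open>c=1\<close> by (simp add: power2_eq_square algebra_simps)
  qed
qed

lemma sq_nonneg: assumes "0 < c" "c \<le> 1" shows "0 \<le> sq c x"
  unfolding sq_def using rad_nonneg[OF assms] by simp
lemma sq_sq: assumes "0 < c" "c \<le> 1" shows "(sq c x)^2 = 1 - 4*c*x*(1-x)"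
  unfolding sq_def by (rule real_sqrt_pow2[OF rad_nonneg[OF assms]])

lemma GG_eq: assumes "0 \<le> a" "a < 1" shows "GG a x = HH (1-a) x"
proof (cases "x = 0")
  case True then show ?thesis by (simp add: GG_def HH_def sq_def)
next
  case False
  let ?s = "sq (1-a) x"
  have s2: "?s^2 = 1 - 4*(1-a)*x*(1-x)" using sq_sq[of "1-a"] assms by simp
  have "1 + ?s > 0" using sq_nonneg[of "1-a" x] assms by linarith
  moreover have "(1 - ?s)*(1+?s) = 4*(1-a)*x*(1-x)" using s2 by (simp add: algebra_simps power2_eq_square)
  ultimately have "(1 - ?s)/(2*(1-a)*x) = 2*(1-x)/(1+?s)" using False assms
    by (simp add: field_simps)
  then show ?thesis using False by (simp add: GG_def HH_def sq_def)
qed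

lemma gg_eq: assumes "0 \<le> a" "a < 1" shows "gg a x = hh (1-a) x"
proof (cases "a = 0")
  case True
  have "1 - 4*1*x*(1-x) = (1-2*x)^2" by (simp add: power2_eq_square algebra_simps)
  then have s: "sq 1 x = \<bar>1-2*x\<bar>" by (simp add: sq_def)
  show ?thesis
  proof (cases "x \<le> 1/2")
    case True
    then show ?thesis using \<open>a=0\<close> s by (simp add: gg_def hh_def HH_def)
  next
    case False
    then have "HH 1 x = (1-x)/x" using s by (simp add: HH_def field_simps)
    then show ?thesis using \<open>a=0\<close> False by (simp add: gg_def hh_def power3_eq_cube power2_eq_square)
  qed
next
  case False
  show ?thesis
  proof (cases "x = 0")
    case True then show ?thesis using False by (simp add: gg_def hh_def)
  next
    case x0: False
    have "GG a x = HH (1-a) x" using GG_eq assms by simp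
    then have "HH (1-a) x = (1 - sq (1-a) x)/(2*(1-a)*x)" using x0 by (simp add: GG_def sq_def)
    moreover have "gg a x = (1 - sq (1-a) x)^3 / (8*(1-a)^2*x^2)" using False x0 by (simp add: gg_def sq_def)
    moreover have "\<And>S c. c \<noteq> 0 \<Longrightarrow> (1-S)^3/(8*c^2*x^2) = c*x*((1-S)/(2*c*x))^3"
      using x0 by (simp add: power_divide field_simps power2_eq_square power3_eq_cube)
    ultimately show ?thesis using assms by (simp add: hh_def)
  qed
qed

lemma sq_deriv: fixes c x :: real assumes "0 < 1 - 4*c*x*(1-x)"
  shows "(sq c has_real_derivative (-2*c*(1-2*x))/sq c x) (at x)"
proof -
  have "((\<lambda>x. sqrt (1 - 4*c*x*(1-x))) has_real_derivative
     (inverse (sqrt (1 - 4*c*x*(1-x))) / 2) * (-(4*c*(1-x)) + 4*c*x)) (at x)"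
    using assms by (auto intro!: derivative_eq_intros simp: algebra_simps)
  moreover have "(inverse (sqrt (1 - 4*c*x*(1-x))) / 2) * (-(4*c*(1-x)) + 4*c*x) = (-2*c*(1-2*x))/sq c x"
  proof -
    have "sqrt (1 - 4*c*x*(1-x)) > 0" using assms by simp
    then show ?thesis unfolding sq_def by (simp add: field_simps)
  qed
  ultimately show ?thesis unfolding sq_def[abs_def] by metis
qed

lemma alg1: fixes S c x :: real assumes "S > 0" "S^2 = 1-4*c*x*(1-x)"
  shows "((-2)*(1+S) - 2*(1-x)*((-2*c*(1-2*x))/S))/((1+S)*(1+S)) = (c*(2*(1-x)/(1+S))^2 - 1)/S"
proof -
  have p: "1+S \<noteq> 0" "S \<noteq> 0" "(1+S)^2 \<noteq> 0" using assms(1) by auto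
  have n: "(-2)*(1+S)*S + 4*c*(1-x)*(1-2*x) = 4*c*(1-x)^2 - (1+S)^2" using assms(2) by algebra
  have "((-2)*(1+S) - 2*(1-x)*((-2*c*(1-2*x))/S))/((1+S)*(1+S)) = ((-2)*(1+S)*S + 4*c*(1-x)*(1-2*x))/(S*(1+S)^2)"
    using p by (simp add: field_simps power2_eq_square)
  also have "\<dots> = (4*c*(1-x)^2 - (1+S)^2)/(S*(1+S)^2)" using n by simp
  also have "\<dots> = (c*(2*(1-x)/(1+S))^2 - 1)/S"
    using p by (simp add: field_simps power2_eq_square)
  finally show ?thesis .
qed

lemma alg2: fixes S c x H :: real assumes "S > 0" "S^2 = 1-4*c*x*(1-x)" "H = 2*(1-x)/(1+S)"
  shows "c*H^3 + c*x*(3*H^2*((c*H^2 - 1)/S)) = 2*c*H^2*(H - x - 1/2)/S"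
proof -
  have HS: "H*(1+S) = 2*(1-x)" using assms by simp
  have "c*x*(H*(1+S))^2 = (H-1+x)*(1+S)^2"
  proof -
    have "c*x*(H*(1+S))^2 = c*x*4*(1-x)^2" using HS by (simp only:) (simp add: power2_eq_square algebra_simps)
    also have "\<dots> = (1-x)*(1-S^2)" using assms(2) by algebra
    also have "\<dots> = (H*(1+S) - (1-x)*(1+S))*(1+S)" using HS by algebra
    finally show ?thesis by (simp add: algebra_simps power2_eq_square)
  qed
  then have Q: "c*x*H^2 = H-1+x" using assms(1)
    by (simp add: power_mult_distrib) 
  have "H*S + 3*(c*x*H^2) - 3*x = 2*H - 2*x - 1" using HS Q by (simp add: algebra_simps)
  then have "H*S + 3*x*(c*H^2 - 1) = 2*(H - x - 1/2)" by (simp add: algebra_simps)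
  moreover have "H + 3*x*((c*H^2 - 1)/S) = (H*S + 3*x*(c*H^2 - 1))/S" using assms(1) by (simp add: field_simps)
  ultimately have "H + 3*x*((c*H^2 - 1)/S) = 2*(H - x - 1/2)/S" by simp
  then have "c*H^2*(H + 3*x*((c*H^2 - 1)/S)) = c*H^2*(2*(H - x - 1/2)/S)" by simp
  then show ?thesis by (simp add: algebra_simps power2_eq_square power3_eq_cube)
qed

lemma HH_deriv: fixes c x :: real assumes "0 < c" "c \<le> 1" "0 < 1 - 4*c*x*(1-x)"
  shows "(HH c has_real_derivative (c*(HH c x)^2 - 1)/sq c x) (at x)"
proof -
  have S: "sq c x > 0" using assms(3) by (simp add: sq_def)
  have S2: "(sq c x)^2 = 1 - 4*c*x*(1-x)" using sq_sq[OF assms(1,2)] .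
  have d: "((\<lambda>x. 2*(1-x)) has_real_derivative -2) (at x)"
    by (auto intro!: derivative_eq_intros)
  have e: "((\<lambda>x. 1 + sq c x) has_real_derivative (-2*c*(1-2*x))/sq c x) (at x)"
    using sq_deriv[OF assms(3)] by (auto intro!: derivative_eq_intros)
  have "((\<lambda>x. 2*(1-x) / (1 + sq c x)) has_real_derivative
      (-2 * (1 + sq c x) - 2*(1-x) * ((-2*c*(1-2*x))/sq c x)) / ((1 + sq c x)*(1 + sq c x))) (at x)"
    using DERIV_divide[OF d e] S by simp
  moreover have "(-2 * (1 + sq c x) - 2*(1-x) * ((-2*c*(1-2*x))/sq c x)) / ((1 + sq c x)*(1 + sq c x))
     = (c*(HH c x)^2 - 1)/sq c x"
    using alg1[OF S S2] by (simp add: HH_def)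
  ultimately show ?thesis unfolding HH_def[abs_def] by simp
qed

lemma hh_deriv: fixes c x :: real assumes "0 < c" "c \<le> 1" "0 < 1 - 4*c*x*(1-x)"
  shows "(hh c has_real_derivative 2*c*(HH c x)^2*(HH c x - x - 1/2)/sq c x) (at x)"
proof -
  have S: "sq c x > 0" using assms(3) by (simp add: sq_def)
  have S2: "(sq c x)^2 = 1 - 4*c*x*(1-x)" using sq_sq[OF assms(1,2)] .
  have "((\<lambda>x. c*x*(HH c x)^3) has_real_derivative
     c*(HH c x)^3 + c*x*(3*(HH c x)^2*((c*(HH c x)^2 - 1)/sq c x))) (at x)"
    using HH_deriv[OF assms] by (auto intro!: derivative_eq_intros simp: algebra_simps)
  then show ?thesis unfolding hh_def[abs_def] using alg2[OF S S2, of "HH c x"] by (simp add: HH_def)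
qed

lemma hh_cont: fixes c :: real assumes "0 < c" "c \<le> 1" shows "continuous_on A (hh c)"
proof -
  have "\<And>x. 1 + sq c x \<noteq> 0" using sq_nonneg[OF assms] by (metis add_nonneg_eq_0_iff zero_le_one one_neq_zero)
  then show ?thesis unfolding hh_def[abs_def] HH_def[abs_def] sq_def[abs_def]
    by (auto intro!: continuous_intros simp: sq_def)
qed

lemma pp_cont: "continuous_on A (pp c)"
  unfolding pp_def[abs_def] by (auto intro!: continuous_intros)

lemma pp_decr: fixes c x y :: real assumes "0 < c" "c \<le> 1" "0 \<le> x" "x < y" "y \<le> 1/2"
  shows "pp c y < pp c x"
proof -
  have e: "pp c x - pp c y = (y-x)*(2 - c*((y+1/2)^2 + x*(x+y+1)))"
    unfolding pp_def power2_eq_square by algebra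
  have "(y+1/2)^2 \<le> 1" using assms by (simp add: power_le_one)
  moreover have "x*(x+y+1) < 1"
  proof -
    have "x*(x+y+1) \<le> x*2" using assms by (intro mult_left_mono) auto
    then show ?thesis using assms by linarith
  qed
  ultimately have "(y+1/2)^2 + x*(x+y+1) < 2" by linarith
  moreover have "0 \<le> (y+1/2)^2 + x*(x+y+1)" using assms by simp
  ultimately have "c*((y+1/2)^2 + x*(x+y+1)) < 2"
    using assms mult_left_le_one_le[of "(y+1/2)^2 + x*(x+y+1)" c] by linarith
  then have "0 < (y-x)*(2 - c*((y+1/2)^2 + x*(x+y+1)))" using assms by simp
  then show ?thesis using e by linarith
qed

lemma q_lt_half: fixes c x :: real assumes "0 < c" "c \<le> 1" "0 \<le> x" "x < 1/2"
  shows "HH c x - x - 1/2 = 4*(1-x)*pp c x / ((3/2 - 3*x + (x+1/2)* sq c x)*(1 + sq c x))"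
proof -
  let ?S = "sq c x"
  have S: "?S \<ge> 0" using sq_nonneg[OF assms(1,2)] .
  have S2: "?S^2 = 1 - 4*c*x*(1-x)" using sq_sq[OF assms(1,2)] .
  have "(x+1/2) * ?S \<ge> 0" using assms S by simp
  then have AB: "3/2 - 3*x + (x+1/2) * ?S > 0" using assms by linarith
  have "HH c x - x - 1/2 = ((3/2 - 3*x) - (x+1/2) * ?S)/(1+?S)"
    using S by (simp add: HH_def field_simps)
  also have "((3/2 - 3*x) - (x+1/2) * ?S) = 4*(1-x)*pp c x / (3/2 - 3*x + (x+1/2) * ?S)"
  proof -
    have "((3/2 - 3*x) - (x+1/2) * ?S)*(3/2 - 3*x + (x+1/2) * ?S) = 4*(1-x)*pp c x"
      unfolding pp_def using S2 by algebra
    then show ?thesis using AB by (simp add: field_simps)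
  qed
  finally show ?thesis by simp
qed

lemma q_ge_half: fixes c x :: real assumes "0 < c" "c \<le> 1" "1/2 \<le> x"
  shows "HH c x - x - 1/2 \<le> 0" and "(x > 1/2 \<or> sq c x > 0) \<Longrightarrow> HH c x - x - 1/2 < 0"
proof -
  let ?S = "sq c x"
  have S: "?S \<ge> 0" using sq_nonneg[OF assms(1,2)] .
  have e: "HH c x - x - 1/2 = ((3/2 - 3*x) - (x+1/2) * ?S)/(1+?S)"
    using S by (simp add: HH_def field_simps)
  have "(x+1/2) * ?S \<ge> 0" using S assms by simp
  then have "(3/2 - 3*x) - (x+1/2) * ?S \<le> 0" using assms by linarith
  then show "HH c x - x - 1/2 \<le> 0" unfolding e using S
    by (intro divide_nonpos_pos) auto
  assume "x > 1/2 \<or> sq c x > 0"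
  then have "(3/2 - 3*x) - (x+1/2) * ?S < 0"
  proof
    assume "x > 1/2" then show ?thesis using \<open>(x+1/2) * ?S \<ge> 0\<close> by linarith
  next
    assume "?S > 0" then have "(x+1/2) * ?S > 0" using assms by simp
    then show ?thesis using assms by linarith
  qed
  then show "HH c x - x - 1/2 < 0" unfolding e using S by (intro divide_neg_pos) auto
qed

lemma q_lt_half_sign: fixes c x :: real assumes "0 < c" "c \<le> 1" "0 \<le> x" "x < 1/2"
  shows "pp c x > 0 \<Longrightarrow> HH c x - x - 1/2 > 0" "pp c x < 0 \<Longrightarrow> HH c x - x - 1/2 < 0"
    "pp c x = 0 \<Longrightarrow> HH c x - x - 1/2 = 0"
proof -
  let ?S = "sq c x"
  have S: "?S \<ge> 0" using sq_nonneg[OF assms(1,2)] .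
  have "(x+1/2) * ?S \<ge> 0" using assms S by simp
  then have AB: "3/2 - 3*x + (x+1/2) * ?S > 0" using assms by linarith
  have D: "(3/2 - 3*x + (x+1/2) * ?S)*(1 + ?S) > 0" using AB S by simp
  have e: "HH c x - x - 1/2 = 4*(1-x)*pp c x / ((3/2 - 3*x + (x+1/2) * ?S)*(1 + ?S))"
    using q_lt_half[OF assms] .
  show "pp c x > 0 \<Longrightarrow> HH c x - x - 1/2 > 0" unfolding e using D assms by simp
  show "pp c x < 0 \<Longrightarrow> HH c x - x - 1/2 < 0" unfolding e using D assms
    by (simp add: divide_neg_pos mult_pos_neg)
  show "pp c x = 0 \<Longrightarrow> HH c x - x - 1/2 = 0" unfolding e by simp
qed

lemma HH_pos: fixes c x :: real assumes "0 < c" "c \<le> 1" "x < 1" shows "HH c x > 0"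
  using sq_nonneg[OF assms(1,2), of x] assms(3) by (simp add: HH_def)

lemma q_sign: fixes c x0 x :: real assumes "0 < c" "c \<le> 1" "0 \<le> x0" "x0 \<le> 1/2" "pp c x0 = 0"
  "0 \<le> x" "x \<le> 1"
  shows "x < x0 \<Longrightarrow> HH c x - x - 1/2 > 0" "x = x0 \<Longrightarrow> HH c x - x - 1/2 = 0"
    "x > x0 \<Longrightarrow> HH c x - x - 1/2 < 0"
proof -
  show "x < x0 \<Longrightarrow> HH c x - x - 1/2 > 0"
    using q_lt_half_sign(1)[OF assms(1,2,6)] pp_decr[OF assms(1,2,6), of x0] assms by simp
  show "x = x0 \<Longrightarrow> HH c x - x - 1/2 = 0"
  proof (cases "x0 < 1/2")
    case True then show "x = x0 \<Longrightarrow> ?thesis" using q_lt_half_sign(3)[OF assms(1,2,3)] assms by simp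
  next
    case False
    then have "x0 = 1/2" using assms by simp
    moreover have "pp c (1/2) = c/2 - 1/2" by (simp add: pp_def power2_eq_square)
    ultimately have "c = 1" using assms(5) by (metis eq_iff_diff_eq_0 divide_cancel_right zero_neq_numeral)
    then have "sq c (1/2) = 0" by (simp add: sq_def)
    then have H1: "HH c (1/2) = 1" by (simp add: HH_def)
    show "x = x0 \<Longrightarrow> ?thesis"
    proof -
      assume "x = x0" then have "x = 1/2" using \<open>x0 = 1/2\<close> by simp
      show ?thesis unfolding \<open>x = 1/2\<close> H1 by simp
    qed
  qed
  show "x > x0 \<Longrightarrow> HH c x - x - 1/2 < 0"
  proof -
    assume xx: "x > x0"
    show ?thesis
    proof (cases "x < 1/2")
      case True
      then show ?thesis using q_lt_half_sign(2)[OF assms(1,2,6) True] pp_decr[OF assms(1,2,3) xx] assms by simp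
    next
      case False
      have "x > 1/2 \<or> sq c x > 0"
      proof (rule ccontr)
        assume "\<not> (x > 1/2 \<or> sq c x > 0)"
        then have x: "x = 1/2" "sq c x \<le> 0" using False by auto
        have "c = 1"
        proof (rule ccontr)
          assume "c \<noteq> 1"
          then have "c < 1" using assms(2) by simp
          have "0 < 1 - 4*c*x*(1-x)" by (rule rad_pos[OF assms(1,2)]) (simp add: \<open>c < 1\<close>)
          then have "sq c x > 0" unfolding sq_def by (rule real_sqrt_gt_zero)
          then show False using x(2) by linarith
        qed
        then have "pp c (1/2) = 0" by (simp add: pp_def power2_eq_square)
        moreover have "pp c (1/2) < pp c x0" using pp_decr[OF assms(1,2,3)] xx x by simp
        ultimately show False using assms by simp
      qed
      then show ?thesis using q_ge_half(2)[OF assms(1,2)] False by simp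
    qed
  qed
qed

lemma root_exists: fixes c :: real assumes "0 < c" "c \<le> 1"
  shows "\<exists>x0. 0 < x0 \<and> x0 \<le> 1/2 \<and> pp c x0 = 0"
proof -
  have "pp c (1/2) \<le> 0" using assms by (simp add: pp_def power2_eq_square)
  moreover have "0 \<le> pp c 0" by (simp add: pp_def)
  ultimately obtain x where x: "0 \<le> x" "x \<le> 1/2" "pp c x = 0"
    using IVT2'[of "pp c" "1/2" 0 0] pp_cont by auto
  moreover have "x \<noteq> 0" using x(3) by (auto simp: pp_def)
  ultimately show ?thesis by (intro exI[of _ x]) auto
qed

lemma x0_half: fixes c x0 :: real assumes "0 < c" "c \<le> 1" "0 \<le> x0" "x0 \<le> 1/2" "pp c x0 = 0" "c = 1"
  shows "x0 = 1/2"
proof (rule ccontr)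
  assume "x0 \<noteq> 1/2"
  then have "pp c (1/2) < pp c x0" using pp_decr[OF assms(1,2,3)] assms by simp
  moreover have "pp c (1/2) = 0" using assms(6) by (simp add: pp_def power2_eq_square)
  ultimately show False using assms by simp
qed

lemma hh_max: fixes c x0 y :: real assumes "0 < c" "c \<le> 1" "0 \<le> x0" "x0 \<le> 1/2" "pp c x0 = 0"
  "0 \<le> y" "y \<le> 1" "y \<noteq> x0"
  shows "hh c y < hh c x0"
proof (cases "y < x0")
  case True
  show ?thesis
  proof (rule DERIV_pos_imp_increasing_open[OF True _ hh_cont[OF assms(1,2)]])
    fix x assume x: "y < x" "x < x0"
    have r: "0 < 1 - 4*c*x*(1-x)" using x assms by (intro rad_pos[OF assms(1,2)]) auto
    have S: "sq c x > 0" using r unfolding sq_def by (rule real_sqrt_gt_zero)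
    have H: "HH c x > 0" using HH_pos[OF assms(1,2)] x assms by simp
    have q: "HH c x - x - 1/2 > 0" using q_sign(1)[OF assms(1-5), of x] x assms by simp
    have "2*c*(HH c x)^2*(HH c x - x - 1/2) > 0" using H q assms(1) by simp
    then show "\<exists>D. DERIV (hh c) x :> D \<and> D > 0"
      using S by (intro exI[of _ "2*c*(HH c x)^2*(HH c x - x - 1/2)/sq c x"] conjI hh_deriv[OF assms(1,2) r] divide_pos_pos)
  qed
next
  case False
  then have yx: "x0 < y" using assms by simp
  show ?thesis
  proof (rule DERIV_neg_imp_decreasing_open[OF yx _ hh_cont[OF assms(1,2)]])
    fix x assume x: "x0 < x" "x < y"
    have "c < 1 \<or> x \<noteq> 1/2"
    proof (cases "c = 1")
      case True then have "x0 = 1/2" using x0_half[OF assms(1-5)] by simp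
      then show ?thesis using x by simp
    qed (use assms in auto)
    then have r: "0 < 1 - 4*c*x*(1-x)" by (intro rad_pos[OF assms(1,2)])
    have S: "sq c x > 0" using r unfolding sq_def by (rule real_sqrt_gt_zero)
    have H: "HH c x > 0" using HH_pos[OF assms(1,2)] x assms by simp
    have q: "HH c x - x - 1/2 < 0" using q_sign(3)[OF assms(1-5), of x] x assms by simp
    have "2*c*(HH c x)^2*(HH c x - x - 1/2) < 0" using H q assms(1) by (simp add: mult_pos_neg)
    then show "\<exists>D. DERIV (hh c) x :> D \<and> D < 0"
      using S by (intro exI[of _ "2*c*(HH c x)^2*(HH c x - x - 1/2)/sq c x"] conjI hh_deriv[OF assms(1,2) r] divide_neg_pos)
  qed
qed

lemma part1: fixes a :: real assumes "0 \<le> a" "a < 1"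
  shows "0 < xmax a" "xmax a \<le> 1/2" "pp (1-a) (xmax a) = 0"
    "{x\<in>{0..1}. \<forall>y\<in>{0..1}. gg a y \<le> gg a x} = {xmax a}"
    "{x\<in>{0..1}. GG a x = x + 1/2} = {xmax a}"
    "0 < a \<Longrightarrow> (\<forall>x\<in>{0<..<1}. (gg a has_real_derivative 0) (at x) \<longrightarrow> x = xmax a)"
    "pbar a = (1-a) * xmax a * (xmax a + 1/2)^3"
proof -
  define c where "c = 1 - a"
  have c: "0 < c" "c \<le> 1" using assms by (auto simp: c_def)
  obtain x0 where x0: "0 < x0" "x0 \<le> 1/2" "pp c x0 = 0" using root_exists[OF c] by blast
  have x0': "0 \<le> x0" using x0 by simp
  have ggh: "gg a = hh c" using gg_eq[OF assms] by (auto simp: c_def)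
  have mx: "\<And>y. y \<in> {0..1} \<Longrightarrow> y \<noteq> x0 \<Longrightarrow> hh c y < hh c x0"
    using hh_max[OF c x0' x0(2,3)] by auto
  have mxle: "\<And>y. y \<in> {0..1} \<Longrightarrow> hh c y \<le> hh c x0"
    using mx by (metis order.refl less_imp_le)
  have M: "{x\<in>{0..1}. \<forall>y\<in>{0..1}. gg a y \<le> gg a x} = {x0}"
  proof
    show "{x0} \<subseteq> {x\<in>{0..1}. \<forall>y\<in>{0..1}. gg a y \<le> gg a x}"
      using mxle x0 unfolding ggh by auto
    show "{x\<in>{0..1}. \<forall>y\<in>{0..1}. gg a y \<le> gg a x} \<subseteq> {x0}"
    proof
      fix x assume x: "x \<in> {x\<in>{0..1}. \<forall>y\<in>{0..1}. gg a y \<le> gg a x}"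
      show "x \<in> {x0}"
      proof (rule ccontr)
        assume "x \<notin> {x0}"
        then have "hh c x < hh c x0" using mx x by auto
        moreover have "hh c x0 \<le> hh c x" using x x0 unfolding ggh by auto
        ultimately show False by simp
      qed
    qed
  qed
  have xm: "xmax a = x0"
  proof -
    have "\<And>x. (x \<in> {0..1} \<and> (\<forall>y\<in>{0..1}. gg a y \<le> gg a x)) \<longleftrightarrow> x = x0"
      using M by blast
    then show ?thesis unfolding xmax_def by simp
  qed
  show "0 < xmax a" "xmax a \<le> 1/2" "pp (1-a) (xmax a) = 0" using x0 xm c_def by auto
  show "{x\<in>{0..1}. \<forall>y\<in>{0..1}. gg a y \<le> gg a x} = {xmax a}" using M xm by simp
  have qs: "\<And>x. x \<in> {0..1} \<Longrightarrow> HH c x = x + 1/2 \<longleftrightarrow> x = x0"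
  proof -
    fix x :: real assume x: "x \<in> {0..1}"
    have q1: "x < x0 \<Longrightarrow> HH c x - x - 1/2 > 0" and q2: "x = x0 \<Longrightarrow> HH c x - x - 1/2 = 0"
      and q3: "x > x0 \<Longrightarrow> HH c x - x - 1/2 < 0" using q_sign[OF c x0' x0(2,3), of x] x by auto
    show "HH c x = x + 1/2 \<longleftrightarrow> x = x0"
    proof
      assume h: "HH c x = x + 1/2"
      show "x = x0"
      proof (rule ccontr)
        assume "x \<noteq> x0"
        then consider "x < x0" | "x > x0" by linarith
        then show False using q1 q3 h by cases auto
      qed
    next
      assume "x = x0" then show "HH c x = x + 1/2" using q2 by simp
    qed
  qed
  show "{x\<in>{0..1}. GG a x = x + 1/2} = {xmax a}"
    using qs xm x0 GG_eq[OF assms] unfolding c_def[symmetric] by auto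
  show "0 < a \<Longrightarrow> (\<forall>x\<in>{0<..<1}. (gg a has_real_derivative 0) (at x) \<longrightarrow> x = xmax a)"
  proof (intro ballI impI)
    fix x assume a: "0 < a" and x: "x \<in> {0<..<1}" and d: "(gg a has_real_derivative 0) (at x)"
    have "c < 1" using a c_def by simp
    then have r: "0 < 1 - 4*c*x*(1-x)" by (intro rad_pos[OF c]) simp
    have S: "sq c x > 0" using r unfolding sq_def by (rule real_sqrt_gt_zero)
    have H: "HH c x > 0" using HH_pos[OF c] x by simp
    have "2*c*(HH c x)^2*(HH c x - x - 1/2)/sq c x = 0"
      using DERIV_unique[OF hh_deriv[OF c r] d[unfolded ggh]] .
    then have "HH c x - x - 1/2 = 0" using S H c by simp
    then have "HH c x = x + 1/2" by linarith
    moreover have "x \<in> {0..1}" using x by simp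
    ultimately have "x = x0" using qs by blast
    then show "x = xmax a" using xm by simp
  qed
  have "pbar a = hh c x0"
    unfolding pbar_def ggh
  proof (rule cSup_eq_maximum)
    show "hh c x0 \<in> hh c ` {0..1}" using x0 by auto
    show "\<And>y. y \<in> hh c ` {0..1} \<Longrightarrow> y \<le> hh c x0" using mxle by auto
  qed
  also have "\<dots> = c * x0 * (x0 + 1/2)^3" using qs[of x0] x0 by (simp add: hh_def)
  finally show "pbar a = (1-a) * xmax a * (xmax a + 1/2)^3" using xm c_def by simp
qed

lemma ln_ineq: fixes y :: real assumes "0 < y" "y \<le> 1/2" shows "2*ln 2*y*(y+1/2)^3 \<le> -ln(1-y)"
proof (cases "y \<le> 3/8")
  case True
  have l: "ln(1-y) \<le> -y" using ln_le_minus_one[of "1-y"] assms by simp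
  have "(y+1/2)^3 \<le> (7/8)^3" using True assms by (intro power_mono) auto
  moreover have "0 \<le> (y+1/2)^3" using assms by simp
  moreover have "ln (2::real) \<le> 25/36" by (rule ln2_le_25_over_36)
  moreover have "0 \<le> ln (2::real)" by simp
  ultimately have "ln 2*(y+1/2)^3 \<le> 25/36*(7/8)^3" by (intro mult_mono) auto
  moreover have "25/36*(7/8)^3 \<le> (1/2::real)" by (simp add: power3_eq_cube)
  ultimately have "2*ln 2*(y+1/2)^3 \<le> 1" by linarith
  then have "y*(2*ln 2*(y+1/2)^3) \<le> y*1" using assms by (intro mult_left_mono) auto
  then show ?thesis using l by (simp add: algebra_simps)
next
  case False
  have "ln(2*(1-y)) \<le> 2*(1-y) - 1" using ln_le_minus_one[of "2*(1-y)"] assms by simp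
  moreover have "ln(2*(1-y)) = ln 2 + ln(1-y)" using assms ln_mult[of 2 "1-y"] by simp
  ultimately have l: "ln 2 + 2*y - 1 \<le> -ln(1-y)" by simp
  have "0 \<le> y^3" "0 \<le> y^2" using assms by simp_all
  then have P: "2*y^3+4*y^2+7/2*y+2 \<ge> 3" using False by linarith
  have "ln (2::real) \<ge> 2/3" by (rule ln2_ge_two_thirds)
  then have "ln 2*(2*y^3+4*y^2+7/2*y+2) \<ge> 2/3*3" using P by (intro mult_mono) auto
  then have "0 \<le> (1/2-y)*(ln 2*(2*y^3+4*y^2+7/2*y+2) - 2)" using assms by simp
  moreover have "\<And>L::real. L + 2*y - 1 - 2*L*y*(y+1/2)^3 = (1/2-y)*(L*(2*y^3+4*y^2+7/2*y+2) - 2)"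
    by algebra
  then have "ln 2 + 2*y - 1 - 2*ln 2*y*(y+1/2)^3 = (1/2-y)*(ln 2*(2*y^3+4*y^2+7/2*y+2) - 2)" .
  ultimately show ?thesis using l by linarith
qed

lemma conv_exp: fixes t S :: real assumes "0 < t" "t \<le> S"
  shows "(1 - exp(-S)) * t / S \<le> 1 - exp(-t)"
proof -
  define l where "l = t/S"
  have l: "0 \<le> l" "l \<le> 1" using assms by (auto simp: l_def)
  have "exp ((1 - l) *\<^sub>R 0 + l *\<^sub>R (-S)) \<le> (1 - l) * exp 0 + l * exp (-S)"
    using convex_onD[OF exp_convex l, of 0 "-S"] by simp
  moreover have "(1 - l) *\<^sub>R 0 + l *\<^sub>R (-S) = -t" using assms by (simp add: l_def)
  ultimately have "exp(-t) \<le> 1 - l + l*exp(-S)" by simp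
  moreover have "(1 - exp(-S)) * t / S = l - l*exp(-S)" using assms by (simp add: l_def field_simps)
  ultimately show ?thesis by simp
qed

lemma ff_bound: fixes beta p :: "nat \<Rightarrow> real" and x0 :: real
  assumes "beta 1 > 0" "beta 2 > 0" "i \<in> {1,2}" "p 1 \<in> {0..1}" "p 2 \<in> {0..1}" "0 < x0" "x0 < 1"
    "beta i * p i < -ln(1-x0)"
  shows "ff beta i p < x0" "0 \<le> ff beta i p"
proof -
  have t0: "0 \<le> beta i * p i" using assms by auto
  have St: "beta i * p i \<le> SS beta p" using assms by (auto simp: SS_def)
  have S0: "0 \<le> SS beta p" using t0 St by simp
  show "0 \<le> ff beta i p" unfolding ff_def using S0 t0
    by (auto intro!: divide_nonneg_pos mult_nonneg_nonneg simp: mult.assoc)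
  show "ff beta i p < x0"
  proof (cases "SS beta p = 0 \<or> beta i * p i = 0")
    case True then show ?thesis using assms unfolding ff_def by (auto simp: mult.assoc)
  next
    case False
    then have "beta i * p i \<noteq> 0" by simp
    then have t: "0 < beta i * p i" "beta i * p i \<le> SS beta p" using t0 St by linarith+
    have "ff beta i p = (1 - exp(-SS beta p)) * (beta i * p i) / SS beta p"
      using False by (simp add: ff_def mult.assoc)
    also have "\<dots> \<le> 1 - exp(-(beta i * p i))" by (rule conv_exp[OF t])
    also have "\<dots> < x0"
    proof -
      have "exp(ln(1-x0)) < exp(-(beta i * p i))" using assms(8) by simp
      then show ?thesis using assms by simp
    qed
    finally show ?thesis .
  qed
qed

lemma pbar_le1: fixes a :: real assumes "0 \<le> a" "a < 1" shows "pbar a \<le> 1"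
proof -
  have x: "0 < xmax a" "xmax a \<le> 1/2" using part1[OF assms] by auto
  have "(xmax a + 1/2)^3 \<le> 1" using x by (intro power_le_one) auto
  moreover have "0 \<le> (xmax a + 1/2)^3" using x by simp
  ultimately have "xmax a * (xmax a + 1/2)^3 \<le> 1 * 1" using x by (intro mult_mono) auto
  moreover have "0 \<le> xmax a * (xmax a + 1/2)^3" using x by simp
  ultimately have "(1-a) * (xmax a * (xmax a + 1/2)^3) \<le> 1 * 1" using assms by (intro mult_mono) auto
  then show ?thesis using part1(7)[OF assms] by (simp add: mult.assoc)
qed

theorem mainTheorem14:
  shows "(\<forall>a::real. 0 \<le> a \<and> a < 1 \<longrightarrow>
            {x\<in>{0..1}. \<forall>y\<in>{0..1}. gg a y \<le> gg a x} = {xmax a}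
          \<and> xmax a \<in> {0..1/2}
          \<and> {x\<in>{0..1}. GG a x = x + 1/2} = {xmax a}
          \<and> (0 < a \<longrightarrow> (\<forall>x\<in>{0<..<1}. (gg a has_real_derivative 0) (at x) \<longrightarrow> x = xmax a)))
   \<and> (\<forall>(beta::nat \<Rightarrow> real) (alpha::nat \<Rightarrow> real) (i::nat).
        beta 1 > 0 \<and> beta 2 > 0 \<and> alpha 1 \<in> {0..<1} \<and> alpha 2 \<in> {0..<1} \<and> i \<in> {1,2}
        \<and> (1 - alpha i) * beta i < 2 * ln 2 \<longrightarrow>
          (\<forall>p::nat \<Rightarrow> real. p 1 \<in> {0..1} \<and> p 2 \<in> {0..1} \<and> p i \<le> pbar (alpha i) \<longrightarrow>
              ff beta i p < xmax (alpha i))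
        \<and> (\<forall>p::nat \<Rightarrow> real. p 1 \<in> {0..pbar (alpha 1)} \<and> p 2 \<in> {0..pbar (alpha 2)} \<longrightarrow>
              (\<exists>D. (gg (alpha i) has_real_derivative D) (at (ff beta i p)) \<and> 0 \<le> D)))"
proof (rule conjI; intro allI impI)
  fix a :: real assume a: "0 \<le> a \<and> a < 1"
  then have a1: "0 \<le> a" "a < 1" by auto
  show "{x\<in>{0..1}. \<forall>y\<in>{0..1}. gg a y \<le> gg a x} = {xmax a}
          \<and> xmax a \<in> {0..1/2}
          \<and> {x\<in>{0..1}. GG a x = x + 1/2} = {xmax a}
          \<and> (0 < a \<longrightarrow> (\<forall>x\<in>{0<..<1}. (gg a has_real_derivative 0) (at x) \<longrightarrow> x = xmax a))"
    using part1[OF a1] by auto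
next
  fix beta alpha :: "nat \<Rightarrow> real" and i :: nat
  assume H: "beta 1 > 0 \<and> beta 2 > 0 \<and> alpha 1 \<in> {0..<1} \<and> alpha 2 \<in> {0..<1} \<and> i \<in> {1,2}
        \<and> (1 - alpha i) * beta i < 2 * ln 2"
  have b: "beta 1 > 0" "beta 2 > 0" "i \<in> {1,2}" using H by auto
  have ai: "0 \<le> alpha i" "alpha i < 1" using H by auto
  have bi: "beta i > 0" using H by auto
  define x0 where "x0 = xmax (alpha i)"
  have x0: "0 < x0" "x0 \<le> 1/2" "pp (1 - alpha i) x0 = 0" using part1(1,2,3)[OF ai] by (auto simp: x0_def)
  have pb: "pbar (alpha i) = (1 - alpha i) * x0 * (x0 + 1/2)^3" using part1(7)[OF ai] by (simp add: x0_def)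
  have key: "\<And>p. p 1 \<in> {0..1} \<Longrightarrow> p 2 \<in> {0..1} \<Longrightarrow> p i \<le> pbar (alpha i) \<Longrightarrow>
      ff beta i p < x0 \<and> 0 \<le> ff beta i p"
  proof -
    fix p :: "nat \<Rightarrow> real" assume p: "p 1 \<in> {0..1}" "p 2 \<in> {0..1}" "p i \<le> pbar (alpha i)"
    have "beta i * p i \<le> beta i * pbar (alpha i)" using p bi by simp
    also have "\<dots> = ((1 - alpha i) * beta i) * (x0 * (x0 + 1/2)^3)" unfolding pb by (simp add: algebra_simps)
    also have "\<dots> < (2 * ln 2) * (x0 * (x0 + 1/2)^3)"
      using H x0 by (intro mult_strict_right_mono) auto
    also have "\<dots> \<le> - ln (1 - x0)" using ln_ineq[OF x0(1,2)] by (simp add: algebra_simps)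
    finally have "beta i * p i < - ln (1 - x0)" .
    then show "ff beta i p < x0 \<and> 0 \<le> ff beta i p"
      using ff_bound[OF b p(1,2) x0(1)] x0 by auto
  qed
  have P1: "\<forall>p::nat \<Rightarrow> real. p 1 \<in> {0..1} \<and> p 2 \<in> {0..1} \<and> p i \<le> pbar (alpha i) \<longrightarrow>
              ff beta i p < xmax (alpha i)"
    using key by (auto simp: x0_def)
  have P2: "\<forall>p::nat \<Rightarrow> real. p 1 \<in> {0..pbar (alpha 1)} \<and> p 2 \<in> {0..pbar (alpha 2)} \<longrightarrow>
              (\<exists>D. (gg (alpha i) has_real_derivative D) (at (ff beta i p)) \<and> 0 \<le> D)"
  proof (intro allI impI)
    fix p :: "nat \<Rightarrow> real" assume p: "p 1 \<in> {0..pbar (alpha 1)} \<and> p 2 \<in> {0..pbar (alpha 2)}"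
    have "pbar (alpha 1) \<le> 1" "pbar (alpha 2) \<le> 1" using H pbar_le1 by auto
    then have p12: "p 1 \<in> {0..1}" "p 2 \<in> {0..1}" using p by auto
    have "p i \<le> pbar (alpha i)" using p b(3) by auto
    then have f: "ff beta i p < x0" "0 \<le> ff beta i p" using key[OF p12] by auto
    define c where "c = 1 - alpha i"
    have c: "0 < c" "c \<le> 1" using ai by (auto simp: c_def)
    let ?f = "ff beta i p"
    have r: "0 < 1 - 4*c*?f*(1-?f)" using f x0 by (intro rad_pos[OF c]) auto
    have S: "sq c ?f > 0" using r unfolding sq_def by (rule real_sqrt_gt_zero)
    have q: "HH c ?f - ?f - 1/2 > 0" using q_sign(1)[OF c _ x0(2), of ?f] x0 f unfolding c_def by auto
    have ggh: "gg (alpha i) = hh c" using gg_eq[OF ai] by (auto simp: c_def)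
    have "2*c*(HH c ?f)^2*(HH c ?f - ?f - 1/2) \<ge> 0" using q c by simp
    then show "\<exists>D. (gg (alpha i) has_real_derivative D) (at ?f) \<and> 0 \<le> D"
      unfolding ggh using S
      by (intro exI[of _ "2*c*(HH c ?f)^2*(HH c ?f - ?f - 1/2)/sq c ?f"] conjI hh_deriv[OF c r] divide_nonneg_pos)
  qed
  show "(\<forall>p::nat \<Rightarrow> real. p 1 \<in> {0..1} \<and> p 2 \<in> {0..1} \<and> p i \<le> pbar (alpha i) \<longrightarrow>
              ff beta i p < xmax (alpha i))
        \<and> (\<forall>p::nat \<Rightarrow> real. p 1 \<in> {0..pbar (alpha 1)} \<and> p 2 \<in> {0..pbar (alpha 2)} \<longrightarrow>
              (\<exists>D. (gg (alpha i) has_real_derivative D) (at (ff beta i p)) \<and> 0 \<le> D))"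
    using P1 P2 by blast
qed

end
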